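(* Let $n$ agents share an additive valuation $v$ with nonnegative item values, and let items $g_1,\dots,g_T$ lie on a line. For $t\in[T]$ let $X^t$ be the contiguous leximin$^2$ allocation of $M_t=\{g_1,\dots,g_t\}$. Then for every $t<T$ and every $j\in[n]$, $P_j(X^t)\le P_j(X^{t+1})$.
   Context: Contiguous allocation of $M_t$: agent $j$ receives the $j$-th block from the left. For a contiguous allocation $A$, $P(A)=(\ell_0,\dots,\ell_n)$ with $\ell_0=0$ and $P_j(A)=\ell_j$ the index of the last item of $A_j$. A leximin allocation is a contiguous allocation maximizing the lowest agent value, subject to that the second-lowest, and so on. The leximin$^2$ allocation is the leximin contiguous allocation with lexicographically smallest $P(A)$. *)

theory Defs
  imports Complex_Main
begin

text \<open>Items are g_1,...,g_T indexed by 1..T; the common additive valuation is given by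
  item values w :: nat => real. A contiguous allocation of M_t = {g_1..g_t} to n agents
  is represented by its cut vector P(A) = (l_0,...,l_n) as a list of length n+1 with
  l_0 = 0, l_n = t, nondecreasing; agent j gets items l_(j-1)+1 .. l_j (possibly empty).\<close>

definition contig :: "nat \<Rightarrow> nat \<Rightarrow> nat list \<Rightarrow> bool" where
  "contig n t ps \<longleftrightarrow> length ps = n + 1 \<and> ps ! 0 = 0 \<and> ps ! n = t \<and> sorted ps"

definition agent_val :: "(nat \<Rightarrow> real) \<Rightarrow> nat list \<Rightarrow> nat \<Rightarrow> real" where
  "agent_val w ps j = (\<Sum>i \<in> {ps ! (j - 1) + 1 .. ps ! j}. w i)"

definition vals :: "(nat \<Rightarrow> real) \<Rightarrow> nat \<Rightarrow> nat list \<Rightarrow> real list" where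
  "vals w n ps = map (agent_val w ps) [1..<n + 1]"

definition lex_less :: "'a::linorder list \<Rightarrow> 'a list \<Rightarrow> bool" where
  "lex_less xs ys \<longleftrightarrow> (\<exists>k < min (length xs) (length ys).
      take k xs = take k ys \<and> xs ! k < ys ! k)"

definition leximin :: "(nat \<Rightarrow> real) \<Rightarrow> nat \<Rightarrow> nat \<Rightarrow> nat list \<Rightarrow> bool" where
  "leximin w n t ps \<longleftrightarrow> contig n t ps \<and>
     (\<forall>qs. contig n t qs \<longrightarrow> \<not> lex_less (sort (vals w n ps)) (sort (vals w n qs)))"

definition leximin2 :: "(nat \<Rightarrow> real) \<Rightarrow> nat \<Rightarrow> nat \<Rightarrow> nat list \<Rightarrow> bool" where
  "leximin2 w n t ps \<longleftrightarrow> leximin w n t ps \<and>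
     (\<forall>qs. leximin w n t qs \<longrightarrow> \<not> lex_less qs ps)"

end

theory Submission
  imports Defs "HOL-Library.Multiset"
begin

definition GG :: "real list \<Rightarrow> real \<Rightarrow> real" where
  "GG A u = sum_list (map (\<lambda>a. min a u) A)"

lemma GG_nth: "GG A u = (\<Sum>i<length A. min (A ! i) u)"
  unfolding GG_def by (simp add: sum_list_sum_nth atLeast0LessThan)

lemma GG_sort: "GG (sort A) u = GG A u"
  unfolding GG_def by (metis mset_map mset_sort sum_mset_sum_list)

lemma lex_tri:
  fixes xs ys :: "'a::linorder list"
  assumes "length xs = length ys" "xs \<noteq> ys" "\<not> lex_less xs ys"
  shows "lex_less ys xs"
proof -
  have "\<exists>i<length xs. xs ! i \<noteq> ys ! i"
    using assms(1,2) nth_equalityI by blast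
  define k where "k = (LEAST i. i < length xs \<and> xs ! i \<noteq> ys ! i)"
  have k: "k < length xs" "xs ! k \<noteq> ys ! k"
    using LeastI_ex[OF \<open>\<exists>i<length xs. xs ! i \<noteq> ys ! i\<close>] unfolding k_def by auto
  have lt: "\<And>i. i < k \<Longrightarrow> xs ! i = ys ! i"
    using not_less_Least k(1) unfolding k_def by fastforce
  have tk: "take k xs = take k ys"
    using k(1) assms(1) lt by (intro nth_equalityI) auto
  show ?thesis
  proof (cases "xs ! k < ys ! k")
    case True
    then have "lex_less xs ys" unfolding lex_less_def using k(1) assms(1) tk by auto
    then show ?thesis using assms(3) by simp
  next
    case False
    then have "ys ! k < xs ! k" using k(2) by simp
    then show ?thesis unfolding lex_less_def using k(1) assms(1) tk by (metis min.idem)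
  qed
qed

lemma lexG:
  assumes "sorted A" "sorted B" "length A = length B" "lex_less A B"
  shows "\<exists>u0 u1. u0 < u1 \<and> (\<forall>u\<le>u0. GG A u = GG B u) \<and>
     (\<forall>u. u0 < u \<and> u \<le> u1 \<longrightarrow> GG A u < GG B u)"
proof -
  obtain k where k: "k < length A" "take k A = take k B" "A ! k < B ! k"
    using assms(3,4) unfolding lex_less_def by auto
  have eqi: "\<And>i. i < k \<Longrightarrow> A ! i = B ! i"
    using k(2) by (metis nth_take)
  have Bge: "\<And>i. k \<le> i \<Longrightarrow> i < length A \<Longrightarrow> B ! k \<le> B ! i"
    using assms(2,3) sorted_nth_mono by metis
  have Age: "\<And>i. k \<le> i \<Longrightarrow> i < length A \<Longrightarrow> A ! k \<le> A ! i"
    using assms(1) sorted_nth_mono by metis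
  show ?thesis
  proof (intro exI conjI allI impI)
    show "A ! k < B ! k" by (rule k(3))
  next
    fix u assume u: "u \<le> A ! k"
    have "\<And>i. i < length A \<Longrightarrow> min (A ! i) u = min (B ! i) u"
    proof -
      fix i assume i: "i < length A"
      show "min (A ! i) u = min (B ! i) u"
      proof (cases "i < k")
        case True then show ?thesis using eqi by simp
      next
        case False
        then have "A ! k \<le> A ! i" "B ! k \<le> B ! i" using Age Bge i by auto
        then show ?thesis using u k(3) by simp
      qed
    qed
    then show "GG A u = GG B u" unfolding GG_nth using assms(3)
      by (metis (no_types, lifting) lessThan_iff sum.cong)
  next
    fix u assume u: "A ! k < u \<and> u \<le> B ! k"
    have le: "\<And>i. i \<in> {..<length A} \<Longrightarrow> min (A ! i) u \<le> min (B ! i) u"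
    proof -
      fix i assume i: "i \<in> {..<length A}"
      show "min (A ! i) u \<le> min (B ! i) u"
      proof (cases "i < k")
        case True then show ?thesis using eqi by simp
      next
        case False
        then have "B ! k \<le> B ! i" using Bge i by auto
        then show ?thesis using u by simp
      qed
    qed
    have "min (A ! k) u < min (B ! k) u" using u by simp
    then have "(\<Sum>i<length A. min (A ! i) u) < (\<Sum>i<length A. min (B ! i) u)"
      using le k(1) by (intro sum_strict_mono_ex1) auto
    then show "GG A u < GG B u" unfolding GG_nth using assms(3) by simp
  qed
qed

lemma final:
  assumes "sorted A" "sorted B" "sorted C" "sorted D"
    "length A = length B" "length C = length D"
    "lex_less A B" "\<not> lex_less C D"
    "\<And>u. GG B u + GG C u \<le> GG A u + GG D u"
  shows False
proof -
  obtain u0 u1 where U: "u0 < u1" "\<forall>u\<le>u0. GG A u = GG B u"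
    "\<forall>u. u0 < u \<and> u \<le> u1 \<longrightarrow> GG A u < GG B u"
    using lexG[OF assms(1,2,5,7)] by blast
  have ge: "\<And>u. u \<le> u0 \<Longrightarrow> GG C u \<le> GG D u" using U(2) assms(9) by smt
  have gt: "\<And>u. u0 < u \<Longrightarrow> u \<le> u1 \<Longrightarrow> GG C u < GG D u" using U(3) assms(9) by smt
  show False
  proof (cases "D = C")
    case True then show ?thesis using gt[of u1] U(1) by simp
  next
    case False
    then have "lex_less D C" using lex_tri[of C D] assms(6,8) by auto
    then obtain v0 v1 where V: "v0 < v1" "\<forall>u\<le>v0. GG D u = GG C u"
      "\<forall>u. v0 < u \<and> u \<le> v1 \<longrightarrow> GG D u < GG C u"
      using lexG[OF assms(4,3)] assms(6) by metis
    show False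
    proof (cases "v0 < u0")
      case True
      then show ?thesis using ge[of "min v1 u0"] V(1) V(3)[rule_format, of "min v1 u0"] by simp
    next
      case False
      show ?thesis
      proof (cases "u1 \<le> v0")
        case True then show ?thesis using gt[of u1] U(1) V(2) by force
      next
        case f2: False
        then show ?thesis using False gt[of "min u1 v1"] V(1) V(3)[rule_format, of "min u1 v1"]
          by simp
      qed
    qed
  qed
qed

lemma bal:
  fixes x y z w u :: real
  assumes "z + w = x + y" "min x y \<le> z" "z \<le> max x y"
  shows "min x u + min y u \<le> min z u + min w u"
  using assms by (simp add: min_def max_def split: if_splits) linarith?

lemma pair_ineq:
  fixes F :: "nat \<Rightarrow> real"
  assumes mono: "\<And>p q. p \<le> q \<Longrightarrow> q \<le> T \<Longrightarrow> F p \<le> F q"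
    and "a \<le> b" "c \<le> d" "b \<le> T" "d \<le> T"
  shows "min (F b - F a) u + min (F d - F c) u \<le>
         min (F (min b d) - F (min a c)) u + min (F (max b d) - F (max a c)) u"
proof (cases "a \<le> c")
  case ac: True
  show ?thesis
  proof (cases "b \<le> d")
    case True then show ?thesis using ac by simp
  next
    case False
    have "F a \<le> F c" "F d \<le> F b" using mono ac False assms by auto
    then show ?thesis using ac False
      by (intro bal) (auto simp: min_def max_def)
  qed
next
  case ac: False
  show ?thesis
  proof (cases "b \<le> d")
    case True
    have "F c \<le> F a" "F b \<le> F d" using mono ac True assms by auto
    then show ?thesis using ac True
      by (intro bal) (auto simp: min_def max_def)
  next
    case False then show ?thesis using ac by (simp add: add.commute)
  qed
qed

theorem mainTheorem5:
  fixes w :: "nat \<Rightarrow> real" and n T t j :: nat and X Y :: "nat list"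
  assumes "n \<ge> 1"
    and "\<And>i. i \<in> {1..T} \<Longrightarrow> w i \<ge> 0"
    and "1 \<le> t" and "t < T"
    and "leximin2 w n t X" and "leximin2 w n (t + 1) Y"
    and "j \<in> {1..n}"
  shows "X ! j \<le> Y ! j"
proof (rule ccontr)
  assume neg: "\<not> X ! j \<le> Y ! j"
  define Z where "Z = map (\<lambda>i. min (X!i) (Y!i)) [0..<n+1]"
  define W where "W = map (\<lambda>i. max (X!i) (Y!i)) [0..<n+1]"
  have lX: "leximin w n t X" and lY: "leximin w n (t+1) Y"
    using assms(5,6) unfolding leximin2_def by auto
  have cX: "contig n t X" and cY: "contig n (t+1) Y"
    using lX lY unfolding leximin_def by auto
  have X: "length X = n+1" "X!0 = 0" "X!n = t" "sorted X" using cX unfolding contig_def by auto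
  have Y: "length Y = n+1" "Y!0 = 0" "Y!n = t+1" "sorted Y" using cY unfolding contig_def by auto
  have Xm: "\<And>i k. i \<le> k \<Longrightarrow> k \<le> n \<Longrightarrow> X!i \<le> X!k" using X sorted_nth_mono by (metis Suc_eq_plus1 le_imp_less_Suc)
  have Ym: "\<And>i k. i \<le> k \<Longrightarrow> k \<le> n \<Longrightarrow> Y!i \<le> Y!k" using Y sorted_nth_mono by (metis Suc_eq_plus1 le_imp_less_Suc)
  have Zn: "\<And>i. i \<le> n \<Longrightarrow> Z!i = min (X!i) (Y!i)" unfolding Z_def
    by (metis (no_types, lifting) Suc_eq_plus1 add_0 diff_zero le_imp_less_Suc length_upt nth_map nth_upt)
  have Wn: "\<And>i. i \<le> n \<Longrightarrow> W!i = max (X!i) (Y!i)" unfolding W_def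
    by (metis (no_types, lifting) Suc_eq_plus1 add_0 diff_zero le_imp_less_Suc length_upt nth_map nth_upt)
  have lZ: "length Z = n+1" and lW: "length W = n+1" unfolding Z_def W_def by auto
  have cZ: "contig n t Z"
    unfolding contig_def
  proof (intro conjI)
    show "sorted Z" unfolding sorted_iff_nth_mono
    proof (intro allI impI)
      fix i k assume "i \<le> k" "k < length Z"
      then have "k \<le> n" "i \<le> k" using lZ by auto
      then have "X!i \<le> X!k" "Y!i \<le> Y!k" using Xm Ym by auto
      then show "Z!i \<le> Z!k" using Zn \<open>k \<le> n\<close> \<open>i \<le> k\<close> by (simp add: min.coboundedI1 min.coboundedI2)
    qed
  qed (use lZ Zn X Y in auto)
  have cW: "contig n (t+1) W"
    unfolding contig_def
  proof (intro conjI)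
    show "sorted W" unfolding sorted_iff_nth_mono
    proof (intro allI impI)
      fix i k assume "i \<le> k" "k < length W"
      then have "k \<le> n" "i \<le> k" using lW by auto
      then have "X!i \<le> X!k" "Y!i \<le> Y!k" using Xm Ym by auto
      then show "W!i \<le> W!k" using Wn \<open>k \<le> n\<close> \<open>i \<le> k\<close> by (simp add: max.coboundedI1 max.coboundedI2)
    qed
  qed (use lW Wn X Y in auto)
  have ZX: "lex_less Z X"
  proof -
    have ex: "\<exists>i<length X. Z ! i \<noteq> X ! i" using neg assms(7) Zn X(1) by (intro exI[of _ j]) auto
    define k where "k = (LEAST i. i < length X \<and> Z ! i \<noteq> X ! i)"
    have k: "k < length X" "Z ! k \<noteq> X ! k"
      using LeastI_ex[OF ex] unfolding k_def by auto
    have lt: "\<And>i. i < k \<Longrightarrow> Z ! i = X ! i"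
      using not_less_Least k(1) unfolding k_def by fastforce
    have tk: "take k Z = take k X"
      using k(1) lZ X(1) lt by (intro nth_equalityI) auto
    have "Z ! k < X ! k" using k Zn X(1) by fastforce
    then show ?thesis unfolding lex_less_def using k(1) lZ X(1) tk by auto
  qed
  define F where "F q = (\<Sum>i\<in>{1..q}. w i)" for q
  have Fmono: "\<And>p q. p \<le> q \<Longrightarrow> q \<le> T \<Longrightarrow> F p \<le> F q"
    unfolding F_def using assms(2) by (intro sum_mono2) auto
  have av: "\<And>ps i. ps!(i-1) \<le> ps!i \<Longrightarrow> agent_val w ps i = F (ps!i) - F (ps!(i-1))"
  proof -
    fix ps :: "nat list" and i assume h: "ps!(i-1) \<le> ps!i"
    define p where "p = ps!(i-1)"
    define q where "q = ps!i - ps!(i-1)"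
    have "F (ps!i) = F (p + q)" using h unfolding p_def q_def by simp
    also have "\<dots> = F p + (\<Sum>k\<in>{p+1..p+q}. w k)" unfolding F_def by (rule sum.ub_add_nat) simp
    finally show "agent_val w ps i = F (ps!i) - F (ps!(i-1))"
      unfolding agent_val_def p_def q_def using h by simp
  qed
  have pairG: "GG (vals w n X) u + GG (vals w n Y) u \<le> GG (vals w n Z) u + GG (vals w n W) u" for u
  proof -
    have "\<And>i. i \<in> set [1..<n+1] \<Longrightarrow> min (agent_val w X i) u + min (agent_val w Y i) u
            \<le> min (agent_val w Z i) u + min (agent_val w W i) u"
    proof -
      fix i assume "i \<in> set [1..<n+1]"
      then have i: "1 \<le> i" "i \<le> n" by auto
      have a1: "X!(i-1) \<le> X!i" "Y!(i-1) \<le> Y!i" using Xm Ym i by auto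
      have "X!i \<le> X!n" "Y!i \<le> Y!n" using Xm Ym i by auto
      then have b: "X!i \<le> T" "Y!i \<le> T" using X(3) Y(3) assms(4) by auto
      have "agent_val w Z i = F (min (X!i) (Y!i)) - F (min (X!(i-1)) (Y!(i-1)))"
        using av[of Z i] Zn[of i] Zn[of "i-1"] i a1 min.mono[OF a1] by simp
      moreover have "agent_val w W i = F (max (X!i) (Y!i)) - F (max (X!(i-1)) (Y!(i-1)))"
        using av[of W i] Wn[of i] Wn[of "i-1"] i a1 max.mono[OF a1] by simp
      ultimately show "min (agent_val w X i) u + min (agent_val w Y i) u
            \<le> min (agent_val w Z i) u + min (agent_val w W i) u"
        using av[of X i] av[of Y i] a1 pair_ineq[OF Fmono a1(1) a1(2) b] by simp
    qed
    then have "(\<Sum>i\<leftarrow>[1..<n+1]. min (agent_val w X i) u + min (agent_val w Y i) u)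
       \<le> (\<Sum>i\<leftarrow>[1..<n+1]. min (agent_val w Z i) u + min (agent_val w W i) u)"
      by (rule sum_list_mono)
    then show ?thesis unfolding GG_def vals_def by (simp add: sum_list_addf o_def)
  qed
  have lenv: "\<And>ps. length (vals w n ps) = n" unfolding vals_def by simp
  have nXZ: "\<not> lex_less (sort (vals w n X)) (sort (vals w n Z))" using lX cZ unfolding leximin_def by auto
  have "sort (vals w n Z) \<noteq> sort (vals w n X)"
  proof
    assume e: "sort (vals w n Z) = sort (vals w n X)"
    have "leximin w n t Z" using lX cZ e unfolding leximin_def by simp
    then show False using assms(5) ZX unfolding leximin2_def by auto
  qed
  then have ZXs: "lex_less (sort (vals w n Z)) (sort (vals w n X))"
    using lex_tri[OF _ _ nXZ] lenv by simp
  have nYW: "\<not> lex_less (sort (vals w n Y)) (sort (vals w n W))" using lY cW unfolding leximin_def by auto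
  show False
    using final[OF sorted_sort sorted_sort sorted_sort sorted_sort _ _ ZXs nYW] lenv pairG
    by (simp add: GG_sort)
qed

end
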